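(* Let $\{p_\theta:\theta\in\Omega\subseteq\mathbb{R}\}$ be DQM in a neighborhood of $0$ with score $T\in L^2(p_0)$ at $\theta=0$. Let $\mathcal F$ be a set of real-valued functions and suppose there is $B>0$ such that for every $f\in\mathcal F$: $\mathbb{E}_\theta f^2<B$ for all $\theta$ in a neighborhood of $0$, and $\mathbb{E}_0|f^2T|<B$, $\mathbb{E}_0|fT^2|<B$, $\mathbb{E}_0 f^2T^2<B$. Then as $\theta\to0$, $$\sup_{f\in\mathcal F}\big|\mathbb{E}_\theta f-(\mathbb{E}_0 f+\theta\,\mathbb{E}_0 fT)\big|=o(|\theta|).$$
   Context: DQM at $0$ with score $T$: $\sqrt{p_\theta(x)}=\sqrt{p_0(x)}(1+\theta T(x)/2)+r_\theta(x)$ with $\int r_\theta^2\,d\nu=o(\theta^2)$, densities taken with respect to a dominating measure $\nu$. $\mathbb{E}_\theta$ denotes expectation under $p_\theta$. *)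

theory Defs
  imports "HOL-Analysis.Analysis" "HOL-Library.Landau_Symbols"
begin

definition density_family :: "'a measure \<Rightarrow> real set \<Rightarrow> (real \<Rightarrow> 'a \<Rightarrow> real) \<Rightarrow> bool" where
  "density_family M \<Omega> p \<longleftrightarrow>
     (\<forall>\<theta>\<in>\<Omega>. p \<theta> \<in> borel_measurable M \<and> (\<forall>x\<in>space M. 0 \<le> p \<theta> x)
        \<and> integrable M (p \<theta>) \<and> (\<integral>x. p \<theta> x \<partial>M) = 1)"

definition expect :: "'a measure \<Rightarrow> (real \<Rightarrow> 'a \<Rightarrow> real) \<Rightarrow> real \<Rightarrow> ('a \<Rightarrow> real) \<Rightarrow> real" where
  "expect M p \<theta> f = (\<integral>x. f x * p \<theta> x \<partial>M)"

definition dqm_rem :: "(real \<Rightarrow> 'a \<Rightarrow> real) \<Rightarrow> ('a \<Rightarrow> real) \<Rightarrow> real \<Rightarrow> 'a \<Rightarrow> real" where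
  "dqm_rem p T \<theta> x = sqrt (p \<theta> x) - sqrt (p 0 x) * (1 + \<theta> * T x / 2)"

definition dqm_at0 :: "'a measure \<Rightarrow> real set \<Rightarrow> (real \<Rightarrow> 'a \<Rightarrow> real) \<Rightarrow> ('a \<Rightarrow> real) \<Rightarrow> bool" where
  "dqm_at0 M \<Omega> p T \<longleftrightarrow> 0 \<in> \<Omega> \<and>
     (\<forall>\<theta>\<in>\<Omega>. integrable M (\<lambda>x. (dqm_rem p T \<theta> x)\<^sup>2)) \<and>
     (\<lambda>\<theta>. \<integral>x. (dqm_rem p T \<theta> x)\<^sup>2 \<partial>M) \<in> o[at 0](\<lambda>\<theta>. \<theta>\<^sup>2)"

end

theory Submission
  imports Defs
begin

lemma my_abs_bound:
  fixes f g :: "'a \<Rightarrow> real"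
  assumes "integrable M f" "integrable M g" "\<And>x. x \<in> space M \<Longrightarrow> \<bar>f x\<bar> \<le> g x"
  shows "\<bar>\<integral>x. f x \<partial>M\<bar> \<le> (\<integral>x. g x \<partial>M)"
proof -
  have "\<bar>\<integral>x. f x \<partial>M\<bar> \<le> (\<integral>x. \<bar>f x\<bar> \<partial>M)" by (rule integral_abs_bound)
  also have "\<dots> \<le> (\<integral>x. g x \<partial>M)" using assms by (intro integral_mono) auto
  finally show ?thesis .
qed

lemma pw:
  fixes f t th p1 p0 L :: real
  assumes p1: "0 \<le> p1" and p0: "0 \<le> p0" and L: "L > 0"
  defines "r \<equiv> sqrt p1 - sqrt p0 * (1 + th * t / 2)"
  shows "\<bar>f * p1 - f * p0 - th * (f * t * p0)\<bar> \<le>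
     3 * L * (f\<^sup>2 * p1 + 4 * (f\<^sup>2 * p0) + th\<^sup>2 / 4 * (f\<^sup>2 * t\<^sup>2 * p0)) + r\<^sup>2 / L
     + th\<^sup>2 / 2 * (\<bar>f * t\<^sup>2\<bar> * p0)"
proof -
  define s1 where "s1 = sqrt p1"
  define s0 where "s0 = sqrt p0"
  define a where "a = s0 * th * t / 2"
  have s1: "s1 \<ge> 0" "s1\<^sup>2 = p1" using p1 by (auto simp: s1_def)
  have s0: "s0 \<ge> 0" "s0\<^sup>2 = p0" using p0 by (auto simp: s0_def)
  have r: "r = s1 - s0 - a" unfolding r_def s1_def s0_def a_def by (simp add: algebra_simps)
  have e1: "f * p1 - f * p0 - th * (f * t * p0) = f * (2 * s0 * r) + f * (a + r)\<^sup>2"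
    unfolding r a_def s1(2)[symmetric] s0(2)[symmetric] by (simp add: power2_eq_square algebra_simps)
  have e2: "\<bar>f * (a + r)\<^sup>2\<bar> \<le> 2 * \<bar>f\<bar> * a\<^sup>2 + 2 * \<bar>f\<bar> * r\<^sup>2"
  proof -
    have "(a + r)\<^sup>2 \<le> 2 * a\<^sup>2 + 2 * r\<^sup>2" using zero_le_square[of "a - r"] by (simp add: power2_eq_square algebra_simps)
    then have "\<bar>f\<bar> * (a + r)\<^sup>2 \<le> \<bar>f\<bar> * (2 * a\<^sup>2 + 2 * r\<^sup>2)" by (simp add: mult_left_mono)
    then show ?thesis by (simp add: abs_mult algebra_simps)
  qed
  have ra: "\<bar>r\<bar> \<le> s1 + s0 + \<bar>a\<bar>" using r s1 s0 by linarith
  have e3: "\<bar>f\<bar> * r\<^sup>2 \<le> \<bar>f\<bar> * \<bar>r\<bar> * (s1 + s0 + \<bar>a\<bar>)"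
  proof -
    have "r\<^sup>2 = \<bar>r\<bar> * \<bar>r\<bar>" by (simp add: power2_eq_square del: abs_mult_self_eq)
    also have "\<dots> \<le> \<bar>r\<bar> * (s1 + s0 + \<bar>a\<bar>)" using ra by (intro mult_left_mono) auto
    finally show ?thesis by (simp add: mult_left_mono mult.assoc)
  qed
  define W where "W = s1 + 2 * s0 + \<bar>a\<bar>"
  have e5: "2 * (\<bar>f\<bar> * \<bar>r\<bar> * W) \<le> L * (f\<^sup>2 * W\<^sup>2) + r\<^sup>2 / L"
  proof -
    have "0 \<le> (L * \<bar>f\<bar> * W - \<bar>r\<bar>)\<^sup>2" by simp
    hence "2 * L * (\<bar>f\<bar> * \<bar>r\<bar> * W) \<le> L * (L * (f\<^sup>2 * W\<^sup>2)) + r\<^sup>2"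
      by (simp add: power2_eq_square algebra_simps)
    hence "L * (2 * (\<bar>f\<bar> * \<bar>r\<bar> * W)) \<le> L * (L * (f\<^sup>2 * W\<^sup>2) + r\<^sup>2 / L)"
      using L by (simp add: algebra_simps)
    thus ?thesis using L by simp
  qed
  have e6: "W\<^sup>2 \<le> 3 * (p1 + 4 * p0 + a\<^sup>2)"
  proof -
    have "W\<^sup>2 \<le> 3 * (s1\<^sup>2 + (2 * s0)\<^sup>2 + \<bar>a\<bar>\<^sup>2)" unfolding W_def
      using sum_squares_ge_zero[of "s1 - 2 * s0" "s1 - \<bar>a\<bar>"] zero_le_square[of "2 * s0 - \<bar>a\<bar>"]
      by (simp add: power2_eq_square algebra_simps)
    thus ?thesis using s1 s0 by (simp add: power2_eq_square algebra_simps)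
  qed
  have e6': "L * (f\<^sup>2 * W\<^sup>2) \<le> 3 * L * (f\<^sup>2 * p1 + 4 * (f\<^sup>2 * p0) + th\<^sup>2 / 4 * (f\<^sup>2 * t\<^sup>2 * p0))"
  proof -
    have "f\<^sup>2 * W\<^sup>2 \<le> f\<^sup>2 * (3 * (p1 + 4 * p0 + a\<^sup>2))" using e6 by (simp add: mult_left_mono)
    also have "a\<^sup>2 = th\<^sup>2/4 * t\<^sup>2 * p0" unfolding a_def s0(2)[symmetric] by (simp add: power2_eq_square)
    finally have "f\<^sup>2 * W\<^sup>2 \<le> 3 * (f\<^sup>2 * p1 + 4 * (f\<^sup>2 * p0) + th\<^sup>2 / 4 * (f\<^sup>2 * t\<^sup>2 * p0))"
      by (simp add: algebra_simps)
    from mult_left_mono[OF this, of L] L show ?thesis by (simp add: mult.assoc)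
  qed
  have e7: "2 * \<bar>f\<bar> * a\<^sup>2 = th\<^sup>2 / 2 * (\<bar>f * t\<^sup>2\<bar> * p0)"
    unfolding a_def s0(2)[symmetric] by (simp add: power2_eq_square abs_mult)
  have e8: "\<bar>f * (2 * s0 * r)\<bar> = 2 * s0 * (\<bar>f\<bar> * \<bar>r\<bar>)" using s0 by (simp add: abs_mult)
  have "\<bar>f * p1 - f * p0 - th * (f * t * p0)\<bar> \<le> \<bar>f * (2 * s0 * r)\<bar> + \<bar>f * (a + r)\<^sup>2\<bar>"
    unfolding e1 by (rule abs_triangle_ineq)
  also have "\<dots> \<le> 2 * (\<bar>f\<bar> * \<bar>r\<bar> * W) + 2 * \<bar>f\<bar> * a\<^sup>2"
    using e2 e3 e8 unfolding W_def by (simp add: algebra_simps)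
  finally show ?thesis using e5 e6' e7 by linarith
qed

theorem lemma3:
  fixes M :: "'a measure" and \<Omega> :: "real set" and p :: "real \<Rightarrow> 'a \<Rightarrow> real"
    and T :: "'a \<Rightarrow> real" and \<F> :: "('a \<Rightarrow> real) set" and B :: real
  assumes nbhd: "0 \<in> interior \<Omega>"
    and dens: "density_family M \<Omega> p"
    and dqm: "dqm_at0 M \<Omega> p T"
    and T_meas: "T \<in> borel_measurable M"
    and T_L2: "integrable M (\<lambda>x. (T x)\<^sup>2 * p 0 x)"
    and B_pos: "B > 0"
    and F_meas: "\<And>f. f \<in> \<F> \<Longrightarrow> f \<in> borel_measurable M"
    and F_nbhd: "\<exists>\<delta>>0. \<forall>f\<in>\<F>. \<forall>\<theta>\<in>\<Omega>. \<bar>\<theta>\<bar> < \<delta> \<longrightarrow>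
                   integrable M (\<lambda>x. (f x)\<^sup>2 * p \<theta> x) \<and> expect M p \<theta> (\<lambda>x. (f x)\<^sup>2) < B"
    and F_1: "\<And>f. f \<in> \<F> \<Longrightarrow> integrable M (\<lambda>x. \<bar>(f x)\<^sup>2 * T x\<bar> * p 0 x)
                 \<and> expect M p 0 (\<lambda>x. \<bar>(f x)\<^sup>2 * T x\<bar>) < B"
    and F_2: "\<And>f. f \<in> \<F> \<Longrightarrow> integrable M (\<lambda>x. \<bar>f x * (T x)\<^sup>2\<bar> * p 0 x)
                 \<and> expect M p 0 (\<lambda>x. \<bar>f x * (T x)\<^sup>2\<bar>) < B"
    and F_3: "\<And>f. f \<in> \<F> \<Longrightarrow> integrable M (\<lambda>x. (f x)\<^sup>2 * (T x)\<^sup>2 * p 0 x)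
                 \<and> expect M p 0 (\<lambda>x. (f x)\<^sup>2 * (T x)\<^sup>2) < B"
  shows "\<forall>\<epsilon>>0. \<forall>\<^sub>F \<theta> in at 0. \<forall>f\<in>\<F>.
           \<bar>expect M p \<theta> f - (expect M p 0 f + \<theta> * expect M p 0 (\<lambda>x. f x * T x))\<bar> \<le> \<epsilon> * \<bar>\<theta>\<bar>"
proof (intro allI impI)
  fix \<epsilon> :: real assume \<epsilon>: "\<epsilon> > 0"
  obtain \<delta> where \<delta>: "\<delta> > 0" and Fn: "\<And>f \<theta>. f \<in> \<F> \<Longrightarrow> \<theta> \<in> \<Omega> \<Longrightarrow> \<bar>\<theta>\<bar> < \<delta> \<Longrightarrow>
     integrable M (\<lambda>x. (f x)\<^sup>2 * p \<theta> x) \<and> expect M p \<theta> (\<lambda>x. (f x)\<^sup>2) < B"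
    using F_nbhd by blast
  obtain e where e: "e > 0" "ball 0 e \<subseteq> \<Omega>" using nbhd mem_interior by blast
  have O0: "0 \<in> \<Omega>" using e by auto
  define lam where "lam = \<epsilon> / (48 * B)"
  have lam: "lam > 0" using \<epsilon> B_pos by (simp add: lam_def)
  define \<eta> where "\<eta> = lam * \<epsilon> / 3"
  have \<eta>: "\<eta> > 0" using lam \<epsilon> by (simp add: \<eta>_def)
  have "\<forall>\<^sub>F \<theta> in at 0. norm (\<integral>x. (dqm_rem p T \<theta> x)\<^sup>2 \<partial>M) \<le> \<eta> * norm (\<theta>\<^sup>2)"
    using landau_o.smallD[OF _ \<eta>] dqm unfolding dqm_at0_def by blast
  then obtain d2 where d2: "d2 > 0" and sm: "\<And>\<theta>. \<theta> \<noteq> 0 \<Longrightarrow> dist \<theta> 0 < d2 \<Longrightarrow>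
      norm (\<integral>x. (dqm_rem p T \<theta> x)\<^sup>2 \<partial>M) \<le> \<eta> * norm (\<theta>\<^sup>2)"
    unfolding eventually_at by blast
  define d where "d = min e (min \<delta> (min 1 (min (2 * \<epsilon> / (3 * B)) d2)))"
  have d: "d > 0" using e \<delta> d2 \<epsilon> B_pos by (simp add: d_def)
  show "\<forall>\<^sub>F \<theta> in at 0. \<forall>f\<in>\<F>.
           \<bar>expect M p \<theta> f - (expect M p 0 f + \<theta> * expect M p 0 (\<lambda>x. f x * T x))\<bar> \<le> \<epsilon> * \<bar>\<theta>\<bar>"
    unfolding eventually_at
  proof (intro exI[of _ d] conjI allI impI ballI)
    show "d > 0" by fact
    fix \<theta> :: real and f assume th: "\<theta> \<noteq> 0 \<and> dist \<theta> 0 < d" and f: "f \<in> \<F>"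
    have tha: "\<bar>\<theta>\<bar> < d" using th by simp
    have thO: "\<theta> \<in> \<Omega>" using tha e(2) by (auto simp: d_def)
    have thd: "\<bar>\<theta>\<bar> < \<delta>" "\<bar>\<theta>\<bar> \<le> 1" "\<bar>\<theta>\<bar> \<le> 2 * \<epsilon> / (3 * B)" using tha by (auto simp: d_def)
    have thpos: "\<bar>\<theta>\<bar> > 0" using th by simp
    have rr: "(\<integral>x. (dqm_rem p T \<theta> x)\<^sup>2 \<partial>M) \<le> \<eta> * \<theta>\<^sup>2"
      using sm[of \<theta>] th tha by (auto simp: d_def)
    have fm: "f \<in> borel_measurable M" using F_meas f by blast
    have pm: "\<And>t. t \<in> \<Omega> \<Longrightarrow> p t \<in> borel_measurable M" and pnn: "\<And>t x. t \<in> \<Omega> \<Longrightarrow> x \<in> space M \<Longrightarrow> 0 \<le> p t x"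
      and pint: "\<And>t. t \<in> \<Omega> \<Longrightarrow> integrable M (p t)"
      using dens unfolding density_family_def by auto
    have I1: "integrable M (\<lambda>x. (f x)\<^sup>2 * p \<theta> x)" "expect M p \<theta> (\<lambda>x. (f x)\<^sup>2) < B"
      using Fn[OF f thO thd(1)] by auto
    have I2: "integrable M (\<lambda>x. (f x)\<^sup>2 * p 0 x)" "expect M p 0 (\<lambda>x. (f x)\<^sup>2) < B"
      using Fn[OF f O0] \<delta> by auto
    have I3: "integrable M (\<lambda>x. (f x)\<^sup>2 * (T x)\<^sup>2 * p 0 x)" "expect M p 0 (\<lambda>x. (f x)\<^sup>2 * (T x)\<^sup>2) < B"
      using F_3[OF f] by auto
    have I5: "integrable M (\<lambda>x. \<bar>f x * (T x)\<^sup>2\<bar> * p 0 x)" "expect M p 0 (\<lambda>x. \<bar>f x * (T x)\<^sup>2\<bar>) < B"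
      using F_2[OF f] by auto
    have I4: "integrable M (\<lambda>x. (dqm_rem p T \<theta> x)\<^sup>2)" using dqm thO unfolding dqm_at0_def by auto
    have ipf: "integrable M (\<lambda>x. f x * p t x)" if t: "t \<in> \<Omega>" "integrable M (\<lambda>x. (f x)\<^sup>2 * p t x)" for t
    proof (rule Bochner_Integration.integrable_bound[OF Bochner_Integration.integrable_add[OF t(2) pint[OF t(1)]]])
      show "(\<lambda>x. f x * p t x) \<in> borel_measurable M" using fm pm[OF t(1)] by measurable
      show "AE x in M. norm (f x * p t x) \<le> norm ((f x)\<^sup>2 * p t x + p t x)"
      proof (rule AE_I2)
        fix x assume x: "x \<in> space M"
        have "\<bar>f x\<bar> \<le> (f x)\<^sup>2 + 1" using zero_le_square[of "\<bar>f x\<bar> - 1"] zero_le_square[of "f x"]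
          by (simp add: power2_eq_square algebra_simps del: abs_mult_self_eq)
        hence "\<bar>f x\<bar> * p t x \<le> ((f x)\<^sup>2 + 1) * p t x" using pnn[OF t(1) x] by (rule mult_right_mono)
        thus "norm (f x * p t x) \<le> norm ((f x)\<^sup>2 * p t x + p t x)"
          using pnn[OF t(1) x] by (simp add: abs_mult algebra_simps)
      qed
    qed
    have iT: "integrable M (\<lambda>x. f x * T x * p 0 x)"
    proof (rule Bochner_Integration.integrable_bound[OF Bochner_Integration.integrable_add[OF I2(1) T_L2]])
      show "(\<lambda>x. f x * T x * p 0 x) \<in> borel_measurable M" using fm pm[OF O0] T_meas by measurable
      show "AE x in M. norm (f x * T x * p 0 x) \<le> norm ((f x)\<^sup>2 * p 0 x + (T x)\<^sup>2 * p 0 x)"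
      proof (rule AE_I2)
        fix x assume x: "x \<in> space M"
        have "\<bar>f x * T x\<bar> \<le> (f x)\<^sup>2 + (T x)\<^sup>2"
          proof -
          have "2 * (\<bar>f x\<bar> * \<bar>T x\<bar>) \<le> (f x)\<^sup>2 + (T x)\<^sup>2"
            using zero_le_square[of "\<bar>f x\<bar> - \<bar>T x\<bar>"] by (simp add: power2_eq_square algebra_simps)
          moreover have "0 \<le> \<bar>f x\<bar> * \<bar>T x\<bar>" by simp
          ultimately show ?thesis unfolding abs_mult by linarith
        qed
        hence "\<bar>f x * T x\<bar> * p 0 x \<le> ((f x)\<^sup>2 + (T x)\<^sup>2) * p 0 x" using pnn[OF O0 x] by (rule mult_right_mono)
        thus "norm (f x * T x * p 0 x) \<le> norm ((f x)\<^sup>2 * p 0 x + (T x)\<^sup>2 * p 0 x)"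
          using pnn[OF O0 x] by (simp add: abs_mult algebra_simps)
      qed
    qed
    define L where "L = lam * \<bar>\<theta>\<bar>"
    have L: "L > 0" using lam thpos by (simp add: L_def)
    define R where "R = (\<lambda>x. 3 * L * ((f x)\<^sup>2 * p \<theta> x + 4 * ((f x)\<^sup>2 * p 0 x) + \<theta>\<^sup>2 / 4 * ((f x)\<^sup>2 * (T x)\<^sup>2 * p 0 x))
        + (dqm_rem p T \<theta> x)\<^sup>2 / L + \<theta>\<^sup>2 / 2 * (\<bar>f x * (T x)\<^sup>2\<bar> * p 0 x))"
    have iR: "integrable M R" unfolding R_def using I1 I2 I3 I4 I5 by auto
    have intR: "integral\<^sup>L M R = 3 * L * (expect M p \<theta> (\<lambda>x. (f x)\<^sup>2) + 4 * expect M p 0 (\<lambda>x. (f x)\<^sup>2)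
        + \<theta>\<^sup>2 / 4 * expect M p 0 (\<lambda>x. (f x)\<^sup>2 * (T x)\<^sup>2)) + (\<integral>x. (dqm_rem p T \<theta> x)\<^sup>2 \<partial>M) / L
        + \<theta>\<^sup>2 / 2 * expect M p 0 (\<lambda>x. \<bar>f x * (T x)\<^sup>2\<bar>)"
      unfolding R_def expect_def using I1 I2 I3 I4 I5 by (simp add: integral_add integral_mult_right integral_divide)
    have eq: "expect M p \<theta> f - (expect M p 0 f + \<theta> * expect M p 0 (\<lambda>x. f x * T x))
        = (\<integral>x. f x * p \<theta> x - f x * p 0 x - \<theta> * (f x * T x * p 0 x) \<partial>M)"
      unfolding expect_def using ipf[OF thO I1(1)] ipf[OF O0 I2(1)] iT
      by (simp add: integral_diff integral_mult_right)
    have "\<bar>expect M p \<theta> f - (expect M p 0 f + \<theta> * expect M p 0 (\<lambda>x. f x * T x))\<bar> \<le> integral\<^sup>L M R"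
      unfolding eq
    proof (rule my_abs_bound)
      show "integrable M (\<lambda>x. f x * p \<theta> x - f x * p 0 x - \<theta> * (f x * T x * p 0 x))"
        using ipf[OF thO I1(1)] ipf[OF O0 I2(1)] iT by auto
      show "integrable M R" by fact
      fix x assume x: "x \<in> space M"
      show "\<bar>f x * p \<theta> x - f x * p 0 x - \<theta> * (f x * T x * p 0 x)\<bar> \<le> R x"
        unfolding R_def dqm_rem_def by (rule pw[OF pnn[OF thO x] pnn[OF O0 x] L])
    qed
    also have "integral\<^sup>L M R \<le> 3 * L * (B + 4 * B + \<theta>\<^sup>2 / 4 * B) + (\<eta> * \<theta>\<^sup>2) / L + \<theta>\<^sup>2 / 2 * B"
      unfolding intR using I1(2) I2(2) I3(2) I5(2) rr L
      by (intro add_mono mult_left_mono divide_right_mono) auto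
    also have "\<dots> \<le> \<epsilon> * \<bar>\<theta>\<bar>"
    proof -
      have t2: "\<theta>\<^sup>2 \<le> 1" using thd(2) by (simp add: abs_le_square_iff[symmetric] abs_square_le_1)
      have a: "3 * L * (B + 4 * B + \<theta>\<^sup>2 / 4 * B) \<le> \<epsilon> * \<bar>\<theta>\<bar> / 3"
      proof -
        have "B + 4 * B + \<theta>\<^sup>2 / 4 * B \<le> 16 * B / 3" using t2 B_pos by (simp add: algebra_simps)
        hence "3 * L * (B + 4 * B + \<theta>\<^sup>2 / 4 * B) \<le> 3 * L * (16 * B / 3)" using L by (intro mult_left_mono) auto
        also have "\<dots> = \<epsilon> * \<bar>\<theta>\<bar> / 3" using B_pos by (simp add: L_def lam_def field_simps)
        finally show ?thesis .
      qed
      have b: "(\<eta> * \<theta>\<^sup>2) / L = \<epsilon> * \<bar>\<theta>\<bar> / 3" using lam thpos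
        by (simp add: \<eta>_def L_def field_simps power2_eq_square abs_mult_self_eq)
      have c: "\<theta>\<^sup>2 / 2 * B \<le> \<epsilon> * \<bar>\<theta>\<bar> / 3"
      proof -
        have "\<theta>\<^sup>2 / 2 * B = \<bar>\<theta>\<bar> * (\<bar>\<theta>\<bar> * B / 2)" by (simp add: power2_eq_square abs_mult_self_eq)
        also have "\<dots> \<le> \<bar>\<theta>\<bar> * (\<epsilon> / 3)"
        proof (intro mult_left_mono)
          show "\<bar>\<theta>\<bar> * B / 2 \<le> \<epsilon> / 3" using thd(3) B_pos by (simp add: field_simps)
        qed simp
        finally show ?thesis by (simp add: mult.commute)
      qed
      show ?thesis using a b c by linarith
    qed
    finally show "\<bar>expect M p \<theta> f - (expect M p 0 f + \<theta> * expect M p 0 (\<lambda>x. f x * T x))\<bar> \<le> \<epsilon> * \<bar>\<theta>\<bar>" .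
  qed
qed

end
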